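(* Let $k\ge2$ and let $\alpha(x)=\forall y\,([y^{-1}xy,x]=e)$. The first-order group formula $\beta(y)=\forall x\,(\alpha(x)\rightarrow y^{-1}xy=x^k)$ defines in $BS(1,k)$ the set $Ab$.
   Context: $BS(1,k)=\langle a,b\mid b^{-1}ab=a^k\rangle$, identified with $\mathbb{Z}[1/k]\rtimes\mathbb{Z}$ (pairs $(y,m)$, $y\in\mathbb{Z}[1/k]=\{zk^i:z,i\in\mathbb{Z}\}$, product $(y_1,m_1)(y_2,m_2)=(y_1+y_2k^{-m_1},m_1+m_2)$), with $a=(1,0)$, $b=(0,1)$; $a^y=(y,0)$ for $y\in\mathbb{Z}[1/k]$. $Ab=\{a^yb:y\in\mathbb{Z}[1/k]\}=\{(y,1):y\in\mathbb{Z}[1/k]\}$. The commutator is $[x,y]=x^{-1}y^{-1}xy$. *)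

theory Defs
  imports Complex_Main "HOL-Algebra.Group"
begin

definition Zk :: "nat \<Rightarrow> rat set" where
  "Zk k = {of_int z * (of_nat k) powi i | z i. True}"

text \<open>BS(1,k) = Z[1/k] semidirect Z, pairs (y,m), with
  (y1,m1)(y2,m2) = (y1 + y2 k^(-m1), m1+m2); a = (1,0), b = (0,1).\<close>
definition BS :: "nat \<Rightarrow> (rat \<times> int) monoid" where
  "BS k = \<lparr> carrier = Zk k \<times> UNIV,
            mult = (\<lambda>(y1, m1) (y2, m2). (y1 + y2 * (of_nat k) powi (- m1), m1 + m2)),
            one = (0, 0) \<rparr>"

definition commutator :: "('a, 'b) monoid_scheme \<Rightarrow> 'a \<Rightarrow> 'a \<Rightarrow> 'a" where
  "commutator G x y = inv\<^bsub>G\<^esub> x \<otimes>\<^bsub>G\<^esub> inv\<^bsub>G\<^esub> y \<otimes>\<^bsub>G\<^esub> x \<otimes>\<^bsub>G\<^esub> y"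

definition alpha_formula :: "('a, 'b) monoid_scheme \<Rightarrow> 'a \<Rightarrow> bool" where
  "alpha_formula G x = (\<forall>y\<in>carrier G.
      commutator G (inv\<^bsub>G\<^esub> y \<otimes>\<^bsub>G\<^esub> x \<otimes>\<^bsub>G\<^esub> y) x = \<one>\<^bsub>G\<^esub>)"

definition beta_formula :: "('a, 'b) monoid_scheme \<Rightarrow> nat \<Rightarrow> 'a \<Rightarrow> bool" where
  "beta_formula G k y = (\<forall>x\<in>carrier G.
      alpha_formula G x \<longrightarrow> inv\<^bsub>G\<^esub> y \<otimes>\<^bsub>G\<^esub> x \<otimes>\<^bsub>G\<^esub> y = x [^]\<^bsub>G\<^esub> k)"

text \<open>Ab = { a^y b : y in Z[1/k] } = { (y,1) : y in Z[1/k] }.\<close>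
definition Ab :: "nat \<Rightarrow> (rat \<times> int) set" where
  "Ab k = {(y, 1) | y. y \<in> Zk k}"

end

theory Submission
  imports Defs
begin

lemma BS_mult: "(y1, m1) \<otimes>\<^bsub>BS k\<^esub> (y2, m2) = (y1 + y2 * (of_nat k) powi (- m1), m1 + m2)"
  by (simp add: BS_def)

lemma BS_one: "\<one>\<^bsub>BS k\<^esub> = (0, 0)"
  by (simp add: BS_def)

lemma BS_carrier: "carrier (BS k) = Zk k \<times> UNIV"
  by (simp add: BS_def)

lemma Zk_add:
  assumes "k > 0" "a \<in> Zk k" "b \<in> Zk k" shows "a + b \<in> Zk k"
proof -
  have kk: "(of_nat k :: rat) \<noteq> 0" using assms by simp
  have key: "of_int z1 * (of_nat k::rat) powi i1 + of_int z2 * (of_nat k) powi i2 \<in> Zk k"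
    if "i1 \<le> i2" for z1 z2 i1 i2
  proof -
    have "(of_nat k::rat) powi i2 = (of_nat k) ^ nat (i2 - i1) * (of_nat k) powi i1"
      using kk that by (simp add: power_int_add[symmetric] power_int_of_nat[symmetric])
    then have "of_int z1 * (of_nat k::rat) powi i1 + of_int z2 * (of_nat k) powi i2
       = of_int (z1 + z2 * int k ^ nat (i2 - i1)) * (of_nat k) powi i1"
      by (simp add: algebra_simps)
    then show ?thesis unfolding Zk_def by blast
  qed
  obtain z1 i1 z2 i2 where a: "a = of_int z1 * (of_nat k) powi i1" and b: "b = of_int z2 * (of_nat k) powi i2"
    using assms unfolding Zk_def by blast
  show ?thesis
  proof (cases "i1 \<le> i2")
    case True then show ?thesis using key a b by simp
  next
    case False then show ?thesis using key[of i2 i1 z2 z1] a b by (simp add: add.commute)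
  qed
qed

lemma Zk_scale:
  assumes "k > 0" "a \<in> Zk k" shows "a * (of_nat k) powi j \<in> Zk k"
proof -
  have kk: "(of_nat k :: rat) \<noteq> 0" using assms by simp
  obtain z i where a: "a = of_int z * (of_nat k) powi i" using assms unfolding Zk_def by blast
  have "a * (of_nat k) powi j = of_int z * (of_nat k) powi (i + j)"
    using kk by (simp add: a power_int_add)
  then show ?thesis unfolding Zk_def by blast
qed

lemma Zk_uminus:
  assumes "a \<in> Zk k" shows "- a \<in> Zk k"
proof -
  obtain z i where a: "a = of_int z * (of_nat k) powi i" using assms unfolding Zk_def by blast
  have "- a = of_int (- z) * (of_nat k) powi i" by (simp add: a)
  then show ?thesis unfolding Zk_def by blast
qed

lemma Zk_int: "of_int z \<in> Zk k"
proof -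
  have "(of_int z :: rat) = of_int z * (of_nat k) powi 0" by simp
  then show ?thesis unfolding Zk_def by blast
qed

lemma BS_group:
  assumes "k > 0" shows "group (BS k)"
proof -
  have kk: "(of_nat k :: rat) \<noteq> 0" using assms by simp
  show ?thesis
  proof (rule groupI)
    fix x y assume "x \<in> carrier (BS k)" "y \<in> carrier (BS k)"
    then show "x \<otimes>\<^bsub>BS k\<^esub> y \<in> carrier (BS k)"
      using assms by (cases x, cases y) (auto simp: BS_carrier BS_mult intro!: Zk_add Zk_scale)
  next
    show "\<one>\<^bsub>BS k\<^esub> \<in> carrier (BS k)" using Zk_int[of 0 k] by (simp add: BS_carrier BS_one)
  next
    fix x y z assume "x \<in> carrier (BS k)" "y \<in> carrier (BS k)" "z \<in> carrier (BS k)"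
    then show "x \<otimes>\<^bsub>BS k\<^esub> y \<otimes>\<^bsub>BS k\<^esub> z = x \<otimes>\<^bsub>BS k\<^esub> (y \<otimes>\<^bsub>BS k\<^esub> z)"
    proof -
      have pa: "(of_nat k::rat) powi (- a - b) = (of_nat k) powi (- a) * (of_nat k) powi (- b)" for a b
        using kk by (metis diff_conv_add_uminus power_int_add)
      show ?thesis using kk by (cases x, cases y, cases z) (simp add: BS_mult pa algebra_simps)
    qed
  next
    fix x assume "x \<in> carrier (BS k)"
    then show "\<one>\<^bsub>BS k\<^esub> \<otimes>\<^bsub>BS k\<^esub> x = x" by (cases x) (simp add: BS_mult BS_one)
  next
    fix x assume x: "x \<in> carrier (BS k)"
    obtain w n where xw: "x = (w, n)" by (cases x)
    have "(- w * (of_nat k) powi n, - n) \<in> carrier (BS k)"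
      using x xw assms by (simp add: BS_carrier Zk_scale Zk_uminus)
    moreover have "(- w * (of_nat k) powi n, - n) \<otimes>\<^bsub>BS k\<^esub> x = \<one>\<^bsub>BS k\<^esub>"
      using kk by (simp add: xw BS_mult BS_one power_int_add[symmetric])
    ultimately show "\<exists>y\<in>carrier (BS k). y \<otimes>\<^bsub>BS k\<^esub> x = \<one>\<^bsub>BS k\<^esub>" by blast
  qed
qed

lemma BS_inv:
  assumes "k > 0" "(w, n) \<in> carrier (BS k)"
  shows "inv\<^bsub>BS k\<^esub> (w, n) = (- w * (of_nat k) powi n, - n)"
proof -
  interpret group "BS k" using BS_group assms by blast
  have kk: "(of_nat k :: rat) \<noteq> 0" using assms by simp
  have c: "(- w * (of_nat k) powi n, - n) \<in> carrier (BS k)"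
    using assms by (simp add: BS_carrier Zk_scale Zk_uminus)
  show ?thesis
    by (rule inv_equality[OF _ assms(2) c]) (use kk in \<open>simp add: BS_mult BS_one power_int_add[symmetric]\<close>)
qed

lemma BS_pow:
  assumes "k > 0"
  shows "(z, 0) [^]\<^bsub>BS k\<^esub> (n::nat) = (of_nat n * z, 0)"
  by (induction n) (simp_all add: BS_one BS_mult algebra_simps)

lemma (in group) comm_one_iff:
  assumes "u \<in> carrier G" "v \<in> carrier G"
  shows "(commutator G u v = \<one>) = (u \<otimes> v = v \<otimes> u)"
proof -
  have "commutator G u v = inv (v \<otimes> u) \<otimes> (u \<otimes> v)"
    using assms by (simp add: commutator_def inv_mult_group m_assoc)
  also have "(\<dots> = \<one>) = (u \<otimes> v = v \<otimes> u)"
    using assms by (metis inv_closed inv_equality inv_inv l_inv m_closed)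
  finally show ?thesis .
qed

lemma powi_eq_one:
  assumes "k \<ge> 2" "(of_nat k :: rat) powi j = 1" shows "j = 0"
proof (rule ccontr)
  assume "j \<noteq> 0"
  show False
  proof (cases "j > 0")
    case True
    have "(of_nat k :: rat) powi j = of_nat k ^ nat j" using True by (simp add: power_int_def)
    moreover have "(of_nat k :: rat) ^ nat j > 1" using assms True by (simp add: one_less_power)
    ultimately show False using assms by simp
  next
    case False
    then have "(of_nat k :: rat) powi j = inverse (of_nat k ^ nat (- j))" by (simp add: power_int_def power_inverse)
    moreover have "(of_nat k :: rat) ^ nat (- j) > 1" using assms False \<open>j \<noteq> 0\<close> by (simp add: one_less_power)
    ultimately show False using assms by simp
  qed
qed


lemma alpha_iff:
  assumes "k \<ge> 2" "(z, m) \<in> carrier (BS k)"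
  shows "alpha_formula (BS k) (z, m) = (m = 0)"
proof -
  have k0: "k > 0" using assms by simp
  have kk: "(of_nat k :: rat) \<noteq> 0" using assms by simp
  interpret group "BS k" using BS_group k0 by blast
  have zk: "z \<in> Zk k" using assms(2) by (simp add: BS_carrier)
  show ?thesis
  proof
    assume al: "alpha_formula (BS k) (z, m)"
    have a1: "(1, 0) \<in> carrier (BS k)" using Zk_int[of 1 k] by (simp add: BS_carrier)
    define q where "q = (of_nat k :: rat) powi (- m)"
    have u: "inv\<^bsub>BS k\<^esub> (1, 0) \<otimes>\<^bsub>BS k\<^esub> (z, m) \<otimes>\<^bsub>BS k\<^esub> (1, 0) = (z - 1 + q, m)"
      using k0 a1 by (simp add: BS_inv BS_mult q_def)
    have uc: "(z - 1 + q, m) \<in> carrier (BS k)"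
      using u a1 assms(2) by (metis inv_closed m_closed)
    have "commutator (BS k) (z - 1 + q, m) (z, m) = \<one>\<^bsub>BS k\<^esub>"
      using al a1 u unfolding alpha_formula_def by metis
    then have "(z - 1 + q, m) \<otimes>\<^bsub>BS k\<^esub> (z, m) = (z, m) \<otimes>\<^bsub>BS k\<^esub> (z - 1 + q, m)"
      using comm_one_iff uc assms(2) by blast
    then have "z - 1 + q + z * q = z + (z - 1 + q) * q" by (simp add: BS_mult q_def)
    then have "(q - 1) * (q - 1) = 0" by (simp add: algebra_simps)
    then have "q = 1" by simp
    then have "- m = 0" using powi_eq_one[OF assms(1), of "- m"] q_def by simp
    then show "m = 0" by simp
  next
    assume m: "m = 0"
    show "alpha_formula (BS k) (z, m)"
      unfolding alpha_formula_def
    proof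
      fix y assume y: "y \<in> carrier (BS k)"
      obtain w n where yw: "y = (w, n)" by (cases y)
      obtain c where c: "inv\<^bsub>BS k\<^esub> y \<otimes>\<^bsub>BS k\<^esub> (z, m) \<otimes>\<^bsub>BS k\<^esub> y = (c, 0)"
        using k0 y by (simp add: yw BS_inv BS_mult m)
      have cc: "(c, 0) \<in> carrier (BS k)" using c y assms(2) by (metis inv_closed m_closed)
      have "(c, 0) \<otimes>\<^bsub>BS k\<^esub> (z, m) = (z, m) \<otimes>\<^bsub>BS k\<^esub> (c, 0)"
        by (simp add: BS_mult m)
      then show "commutator (BS k) (inv\<^bsub>BS k\<^esub> y \<otimes>\<^bsub>BS k\<^esub> (z, m) \<otimes>\<^bsub>BS k\<^esub> y) (z, m) = \<one>\<^bsub>BS k\<^esub>"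
        using comm_one_iff cc assms(2) c by simp
    qed
  qed
qed

theorem lemma4p5:
  fixes k :: nat
  assumes "k \<ge> 2"
  shows "{y \<in> carrier (BS k). beta_formula (BS k) k y} = Ab k"
proof -
  have k0: "k > 0" using assms by simp
  have kk: "(of_nat k :: rat) \<noteq> 0" using assms by simp
  interpret group "BS k" using BS_group k0 by blast
  have conj: "inv\<^bsub>BS k\<^esub> (w, n) \<otimes>\<^bsub>BS k\<^esub> (z, 0) \<otimes>\<^bsub>BS k\<^esub> (w, n) = (z * (of_nat k) powi n, 0)"
    if "(w, n) \<in> carrier (BS k)" for w n z
    using that k0 kk by (simp add: BS_inv BS_mult algebra_simps)
  show ?thesis
  proof (rule equalityI[OF subsetI subsetI])
    fix y assume "y \<in> {y \<in> carrier (BS k). beta_formula (BS k) k y}"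
    then have y: "y \<in> carrier (BS k)" and b: "beta_formula (BS k) k y" by auto
    obtain w n where yw: "y = (w, n)" by (cases y)
    have a1: "(1, 0) \<in> carrier (BS k)" using Zk_int[of 1 k] by (simp add: BS_carrier)
    have "alpha_formula (BS k) (1, 0)" using alpha_iff[OF assms a1] by simp
    then have "inv\<^bsub>BS k\<^esub> y \<otimes>\<^bsub>BS k\<^esub> (1, 0) \<otimes>\<^bsub>BS k\<^esub> y = (1, 0) [^]\<^bsub>BS k\<^esub> k"
      using b a1 unfolding beta_formula_def by blast
    then have "(of_nat k :: rat) powi n = of_nat k"
      using conj[of w n 1] y yw BS_pow[OF k0, of 1 k] by simp
    then have "(of_nat k :: rat) powi (n - 1) = 1"
      using kk by (simp add: power_int_diff)
    then have "n - 1 = 0" using powi_eq_one[OF assms, of "n - 1"] by blast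
    then have "n = 1" by simp
    then show "y \<in> Ab k" using y yw by (simp add: Ab_def BS_carrier)
  next
    fix y assume "y \<in> Ab k"
    then obtain w where yw: "y = (w, 1)" and w: "w \<in> Zk k" by (auto simp: Ab_def)
    have y: "y \<in> carrier (BS k)" using yw w by (simp add: BS_carrier)
    have "beta_formula (BS k) k y"
      unfolding beta_formula_def
    proof (intro ballI impI)
      fix x assume x: "x \<in> carrier (BS k)" and al: "alpha_formula (BS k) x"
      obtain z m where xz: "x = (z, m)" by (cases x)
      have "m = 0" using alpha_iff[OF assms, of z m] x al xz by simp
      then show "inv\<^bsub>BS k\<^esub> y \<otimes>\<^bsub>BS k\<^esub> x \<otimes>\<^bsub>BS k\<^esub> y = x [^]\<^bsub>BS k\<^esub> k"
        using conj[of w 1 z] y yw xz BS_pow[OF k0, of z k] by (simp add: mult.commute)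
    qed
    then show "y \<in> {y \<in> carrier (BS k). beta_formula (BS k) k y}" using y by simp
  qed
qed

end
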